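(* Let $q$ be a prime power, $n\geq 1$, and $a_0,\ldots,a_n$ positive integers. Fix $i\in\{0,\ldots,n\}$ and consider the morphism $$\pi_i:\mathbb{P}(a_0,\ldots,a_{i-1},1,a_{i+1},\ldots,a_n)\to\mathbb{P}(a_0,\ldots,a_n),\qquad [x_0:\cdots:x_n]\mapsto[x_0:\cdots:x_{i-1}:x_i^{a_i}:x_{i+1}:\cdots:x_n].$$ Let $P=[y_0:\cdots:y_n]\in\mathbb{P}(a_0,\ldots,a_n)(\mathbb{F}_q)$ with $y_i=1$, $y_j\in\mathbb{F}_q$ for all $0\le j\le n$, and $P\neq[0:\cdots:0:1:0:\cdots:0]$ (the point whose only nonzero coordinate is the $i$-th one). Let $\operatorname{Supp}(P)=\{j: y_j\neq 0\}$, and set $$\delta_P=\gcd(a_j\mid j\in\operatorname{Supp}(P)),\qquad \delta_{i,P}=\gcd(a_j\mid j\in\operatorname{Supp}(P),\ j\neq i).$$ Then: (1) $\displaystyle \#\pi_i^{-1}(P)(\mathbb{F}_q)=\frac{\gcd\bigl(a_i,(q-1)\,\delta_{i,P}\bigr)}{\delta_P}.$ (2) If moreover $\gcd(a_i,a_j,q-1)=1$ for every $j\in\{0,\ldots,n\}\setminus\{i\}$, then $\#\pi_i^{-1}(P)(\mathbb{F}_q)=\gcd(a_i,q-1)$.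
   Context: For positive integers $b_0,\ldots,b_n$, the weighted projective space $\mathbb{P}(b_0,\ldots,b_n)$ over $\overline{\mathbb{F}}_q$ is the set of tuples $(x_0,\ldots,x_n)\in\overline{\mathbb{F}}_q^{\,n+1}\setminus\{0\}$ modulo the equivalence $(x_0,\ldots,x_n)\sim(\lambda^{b_0}x_0,\ldots,\lambda^{b_n}x_n)$ for $\lambda\in\overline{\mathbb{F}}_q^*$; the class of $(x_0,\ldots,x_n)$ is written $[x_0:\cdots:x_n]$. Its set of $\mathbb{F}_q$-rational points $\mathbb{P}(b_0,\ldots,b_n)(\mathbb{F}_q)$ consists of the points fixed by the Frobenius map $[x_0:\cdots:x_n]\mapsto[x_0^q:\cdots:x_n^q]$. For $P$ as in the claim, $\pi_i^{-1}(P)(\mathbb{F}_q)$ denotes the set of $\mathbb{F}_q$-rational points $Q$ of the source space with $\pi_i(Q)=P$. *)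

theory Defs
  imports "HOL-Computational_Algebra.Polynomial"
begin

text \<open>Points of affine (n+1)-space are modelled as functions nat => 'k that vanish
beyond index n; weights are b :: nat => nat (only b 0 .. b n matter).\<close>

definition wp_vecs :: "nat \<Rightarrow> (nat \<Rightarrow> 'k::field) set" where
  "wp_vecs n = {x. (\<forall>j>n. x j = 0) \<and> (\<exists>j\<le>n. x j \<noteq> 0)}"

definition wp_rel :: "nat \<Rightarrow> (nat \<Rightarrow> nat) \<Rightarrow> ((nat \<Rightarrow> 'k::field) \<times> (nat \<Rightarrow> 'k)) set" where
  "wp_rel n b = {(x, y). x \<in> wp_vecs n \<and> y \<in> wp_vecs n \<and>
      (\<exists>l. l \<noteq> 0 \<and> (\<forall>j\<le>n. y j = l ^ (b j) * x j))}"

definition WP :: "nat \<Rightarrow> (nat \<Rightarrow> nat) \<Rightarrow> (nat \<Rightarrow> 'k::field) set set" where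
  "WP n b = wp_vecs n // wp_rel n b"

definition wp_class :: "nat \<Rightarrow> (nat \<Rightarrow> nat) \<Rightarrow> (nat \<Rightarrow> 'k::field) \<Rightarrow> (nat \<Rightarrow> 'k) set" where
  "wp_class n b x = wp_rel n b `` {x}"

definition frob_vec :: "nat \<Rightarrow> (nat \<Rightarrow> 'k::field) \<Rightarrow> (nat \<Rightarrow> 'k)" where
  "frob_vec q x = (\<lambda>j. x j ^ q)"

text \<open>F_q-rational points: classes fixed by the Frobenius [x] |-> [x^q].\<close>
definition WP_rat :: "nat \<Rightarrow> (nat \<Rightarrow> nat) \<Rightarrow> nat \<Rightarrow> (nat \<Rightarrow> 'k::field) set set" where
  "WP_rat n b q = {P \<in> WP n b. \<forall>x\<in>P. wp_class n b (frob_vec q x) = P}"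

definition pi_vec :: "nat \<Rightarrow> (nat \<Rightarrow> nat) \<Rightarrow> (nat \<Rightarrow> 'k::field) \<Rightarrow> (nat \<Rightarrow> 'k)" where
  "pi_vec i a x = x(i := x i ^ a i)"

definition pi_fibre_rat :: "nat \<Rightarrow> nat \<Rightarrow> (nat \<Rightarrow> nat) \<Rightarrow> nat \<Rightarrow> (nat \<Rightarrow> 'k::field) set
    \<Rightarrow> (nat \<Rightarrow> 'k) set set" where
  "pi_fibre_rat n i a q P =
     {Q \<in> WP_rat n (a(i := 1)) q. \<forall>x\<in>Q. wp_class n a (pi_vec i a x) = P}"

end

theory Submission
  imports Defs
begin


lemma pow_gcd_one:
  fixes x :: "'k::field"
  assumes "x ^ a = 1" "x ^ b = 1" shows "x ^ gcd a b = 1"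
proof (cases "a = 0")
  case True then show ?thesis using assms by simp
next
  case False
  then obtain u v where uv: "a * u = b * v + gcd a b" using bezout_nat by blast
  have "1 = x ^ (a * u)" by (simp add: power_mult assms)
  also have "\<dots> = x ^ (b*v) * x ^ gcd a b" by (simp add: uv power_add)
  also have "\<dots> = x ^ gcd a b" by (simp add: power_mult assms)
  finally show ?thesis by simp
qed

lemma pow_Gcd_one:
  fixes x :: "'k::field"
  assumes "finite T" "\<forall>j\<in>T. x ^ a j = 1" shows "x ^ Gcd (a ` T) = 1"
  using assms by (induction T rule: finite_induct) (auto intro: pow_gcd_one)

lemma card_image_eqrel:
  assumes "\<forall>x\<in>R. \<forall>y\<in>R. f x = f y \<longleftrightarrow> g x = g y"
  shows "card (f ` R) = card (g ` R)"
proof -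
  define h where "h = (\<lambda>X. g (SOME x. x\<in>R \<and> f x = X))"
  have hf: "h (f x) = g x" if "x \<in> R" for x
  proof -
    have "(SOME x'. x'\<in>R \<and> f x' = f x) \<in> R \<and> f (SOME x'. x'\<in>R \<and> f x' = f x) = f x"
      by (rule someI[of _ x]) (use that in auto)
    then show ?thesis unfolding h_def using assms that by blast
  qed
  have "bij_betw h (f ` R) (g ` R)"
    unfolding bij_betw_def inj_on_def
    using hf assms by (auto simp: image_iff)
  then show ?thesis by (rule bij_betw_same_card)
qed

lemma char_dvd:
  fixes p m :: nat
  assumes "prime p" "of_nat p = (0::'k::field)" "of_nat m = (0::'k)"
  shows "p dvd m"
proof (rule ccontr)
  assume "\<not> p dvd m"
  then have cop: "coprime m p" using assms(1) by (metis coprime_commute prime_imp_coprime)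
  have "m \<noteq> 0" using \<open>\<not> p dvd m\<close> by (metis dvd_0_right)
  then obtain u v where uv: "m * u = p * v + gcd m p" using bezout_nat by blast
  then have "m * u = p * v + 1" using cop by simp
  then have "(of_nat (m*u) :: 'k) = of_nat (p*v + 1)" by simp
  then have "(0::'k) = 1" using assms(2,3) by simp
  then show False by simp
qed

lemma card_roots_sep:
  fixes f :: "'k::field poly"
  assumes ac: "\<forall>f :: 'k poly. degree f > 0 \<longrightarrow> (\<exists>z. poly f z = 0)"
  shows "f \<noteq> 0 \<Longrightarrow> (\<forall>r. poly f r = 0 \<longrightarrow> poly (pderiv f) r \<noteq> 0) \<Longrightarrow> card {r. poly f r = 0} = degree f"
proof (induction "degree f" arbitrary: f)
  case 0
  then obtain c where "f = [:c:]" by (metis degree_eq_zeroE)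
  with 0 have "{r. poly f r = 0} = {}" by auto
  then show ?case using 0 by simp
next
  case (Suc k)
  then obtain r where r: "poly f r = 0" using ac by fastforce
  then obtain g where fg: "f = [:-r,1:] * g" using poly_eq_0_iff_dvd by (metis dvdE)
  have g0: "g \<noteq> 0" using fg Suc.prems by auto
  have "degree ([:-r,1:]*g) = degree [:-r,1:] + degree g" by (rule degree_mult_eq) (use g0 in auto)
  then have dg: "degree g = k" using Suc.hyps(2) fg by simp
  have p1: "pderiv [:-r,1:] = (1::'k poly)" by (simp add: pderiv_pCons)
  have pd: "pderiv f = [:-r,1:] * pderiv g + g" by (simp only: fg pderiv_mult p1 mult_1_right)
  have "poly (pderiv f) r = poly g r" using pd by simp
  then have gr: "poly g r \<noteq> 0" using Suc.prems(2) r by metis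
  have roots: "{s. poly f s = 0} = insert r {s. poly g s = 0}" using fg by auto
  have "\<forall>s. poly g s = 0 \<longrightarrow> poly (pderiv g) s \<noteq> 0"
  proof (intro allI impI)
    fix s assume gs: "poly g s = 0"
    then have "s \<noteq> r" using gr by auto
    moreover have "poly f s = 0" using fg gs by simp
    ultimately show "poly (pderiv g) s \<noteq> 0" using Suc.prems(2) pd gs by auto
  qed
  then have "card {s. poly g s = 0} = k" using Suc.hyps(1)[of g] dg g0 by simp
  then show ?case using roots gr poly_roots_finite[OF g0] Suc.hyps(2) by simp
qed

lemma card_unity:
  fixes m :: nat
  assumes ac: "\<forall>f :: 'k::field poly. degree f > 0 \<longrightarrow> (\<exists>z. poly f z = 0)"
    and "m > 0" and "of_nat m \<noteq> (0::'k)"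
  shows "card {z::'k. z ^ m = 1} = m"
proof -
  define f :: "'k poly" where "f = monom 1 m + [:-1:]"
  have df: "degree f = m" unfolding f_def using assms(2)
    by (subst degree_add_eq_left) (auto simp: degree_monom_eq)
  have f0: "f \<noteq> 0" using df assms(2) by auto
  have rs: "{r. poly f r = 0} = {z. z ^ m = 1}" by (auto simp: f_def poly_monom)
  have "\<forall>r. poly f r = 0 \<longrightarrow> poly (pderiv f) r \<noteq> 0"
  proof (intro allI impI)
    fix r assume "poly f r = 0"
    then have "r ^ m = 1" using rs by auto
    then have "r \<noteq> 0" using assms(2) by (metis power_0_left zero_neq_one not_gr0)
    then show "poly (pderiv f) r \<noteq> 0" using assms(3)
      by (simp add: f_def pderiv_add pderiv_monom poly_monom)
  qed
  then show ?thesis using card_roots_sep[OF ac f0] df rs by simp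
qed

lemma exists_root:
  fixes w :: "'k::field"
  assumes ac: "\<forall>f :: 'k poly. degree f > 0 \<longrightarrow> (\<exists>z. poly f z = 0)" and "d > 0"
  shows "\<exists>z. z ^ d = w"
proof -
  define f :: "'k poly" where "f = monom 1 d + [:-w:]"
  have "degree f = d" unfolding f_def using assms(2)
    by (subst degree_add_eq_left) (auto simp: degree_monom_eq)
  then obtain z where "poly f z = 0" using ac assms(2) by auto
  then show ?thesis by (auto simp: f_def poly_monom)
qed



lemma wp_equiv: "equiv (wp_vecs n) (wp_rel n b :: ((nat\<Rightarrow>'k::field) \<times> _) set)"
proof (rule equivI)
  show "refl_on (wp_vecs n) (wp_rel n b :: ((nat\<Rightarrow>'k::field) \<times> _) set)"
    unfolding refl_on_def wp_rel_def by (auto intro!: exI[of _ 1])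
  show "sym (wp_rel n b :: ((nat\<Rightarrow>'k::field) \<times> _) set)"
  proof (rule symI)
    fix x y :: "nat \<Rightarrow> 'k" assume "(x,y) \<in> wp_rel n b"
    then obtain l where l: "x \<in> wp_vecs n" "y \<in> wp_vecs n" "l \<noteq> 0" "\<forall>j\<le>n. y j = l ^ b j * x j"
      unfolding wp_rel_def by auto
    have h: "\<forall>j\<le>n. x j = inverse l ^ b j * y j" using l by (simp add: power_inverse)
    have "inverse l \<noteq> 0" using l by simp
    then show "(y,x) \<in> wp_rel n b" using l h unfolding wp_rel_def by blast
  qed
  show "trans (wp_rel n b :: ((nat\<Rightarrow>'k::field) \<times> _) set)"
  proof (rule transI)
    fix x y z :: "nat \<Rightarrow> 'k" assume "(x,y) \<in> wp_rel n b" "(y,z) \<in> wp_rel n b"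
    then obtain l m where l: "x \<in> wp_vecs n" "z \<in> wp_vecs n" "l \<noteq> 0" "m \<noteq> 0"
       "\<forall>j\<le>n. y j = l ^ b j * x j" "\<forall>j\<le>n. z j = m ^ b j * y j"
      unfolding wp_rel_def by auto
    have "\<forall>j\<le>n. z j = (m * l) ^ b j * x j" using l by (simp add: power_mult_distrib)
    moreover have "m * l \<noteq> 0" using l by simp
    ultimately show "(x,z) \<in> wp_rel n b" using l unfolding wp_rel_def by blast
  qed
  show "wp_rel n b \<subseteq> wp_vecs n \<times> (wp_vecs n :: (nat\<Rightarrow>'k) set)" unfolding wp_rel_def by auto
qed

lemma frob_vecs: "q > 0 \<Longrightarrow> x \<in> wp_vecs n \<Longrightarrow> frob_vec q x \<in> wp_vecs n"
  unfolding wp_vecs_def frob_vec_def by auto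

lemma frob_rel: assumes "q > 0" "(x, x') \<in> wp_rel n b"
  shows "(frob_vec q x, frob_vec q x') \<in> wp_rel n b"
proof -
  obtain l where l: "x \<in> wp_vecs n" "x' \<in> wp_vecs n" "l \<noteq> 0" "\<forall>j\<le>n. x' j = l ^ b j * x j"
    using assms(2) unfolding wp_rel_def by auto
  have "\<forall>j\<le>n. frob_vec q x' j = (l^q) ^ b j * frob_vec q x j"
    using l by (simp add: frob_vec_def power_mult_distrib flip: power_mult) (simp add: mult.commute)
  moreover have "l^q \<noteq> 0" using l by simp
  ultimately show ?thesis using l frob_vecs[OF assms(1)] unfolding wp_rel_def by blast
qed

lemma class_eq_iff: "x \<in> wp_vecs n \<Longrightarrow> x' \<in> wp_vecs n \<Longrightarrow>
   wp_class n b x = wp_class n b x' \<longleftrightarrow> (x, x') \<in> wp_rel n b"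
  unfolding wp_class_def using equiv_class_eq_iff[OF wp_equiv] by metis

lemma class_mem: "x \<in> wp_vecs n \<Longrightarrow> x \<in> wp_class n b x"
  unfolding wp_class_def using equiv_class_self[OF wp_equiv] by metis

lemma class_in_WP: "x \<in> wp_vecs n \<Longrightarrow> wp_class n b x \<in> WP n b"
  unfolding wp_class_def WP_def by (rule quotientI)

lemma WP_elem: "Q \<in> WP n b \<Longrightarrow> \<exists>x \<in> wp_vecs n. Q = wp_class n b x"
  unfolding wp_class_def WP_def by (auto elim: quotientE)

lemma mem_class: "x' \<in> wp_class n b x \<Longrightarrow> (x, x') \<in> wp_rel n b"
  unfolding wp_class_def by auto



lemma fibre_eq:
  fixes q n i :: nat and a :: "nat \<Rightarrow> nat" and y :: "nat \<Rightarrow> 'k::field"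
  assumes q1: "q \<ge> 1" and apos: "\<forall>j\<le>n. a j > 0" and "i \<le> n"
    and yi: "y i = 1" and yq: "\<forall>j\<le>n. y j ^ q = y j" and yn: "\<forall>j>n. y j = 0"
    and g_def: "g = gcd (a i) ((q - 1) * Gcd (a ` ({j. j \<le> n \<and> y j \<noteq> 0} - {i})))"
  shows "pi_fibre_rat n i a q (wp_class n a y) =
     (\<lambda>\<zeta>. wp_class n (a(i:=1)) (y(i:=\<zeta>))) ` {\<zeta>. \<zeta> ^ g = 1}"
proof -
  define S' where "S' = {j. j \<le> n \<and> y j \<noteq> 0} - {i}"
  define \<delta> where "\<delta> = Gcd (a ` S')"
  define a' where "a' = a(i:=1)"
  have q0: "q > 0" using q1 by simp
  have g: "g = gcd (a i) ((q - 1) * \<delta>)" using g_def S'_def \<delta>_def by simp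
  have finS: "finite S'" unfolding S'_def by (rule finite_subset[of _ "{..n}"]) auto
  have g0: "g > 0" using g apos \<open>i \<le> n\<close> by simp
  have zvec: "y(i:=\<zeta>) \<in> wp_vecs n" if "\<zeta> \<noteq> 0" for \<zeta>
    unfolding wp_vecs_def using that yn \<open>i \<le> n\<close> by (auto intro!: exI[of _ i])
  have yvec: "y \<in> wp_vecs n" using zvec[of 1] yi by (metis fun_upd_triv one_neq_zero)
  show ?thesis
  proof (rule set_eqI, rule iffI)
    fix Q assume QF: "Q \<in> pi_fibre_rat n i a q (wp_class n a y)"
    then have QW: "Q \<in> WP n a'" and Qfrob: "\<forall>x\<in>Q. wp_class n a' (frob_vec q x) = Q"
      and Qpi: "\<forall>x\<in>Q. wp_class n a (pi_vec i a x) = wp_class n a y"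
      unfolding pi_fibre_rat_def WP_rat_def a'_def by auto
    obtain x where xv: "x \<in> wp_vecs n" and Qx: "Q = wp_class n a' x" using WP_elem[OF QW] by blast
    have xQ: "x \<in> Q" using Qx class_mem[OF xv] by simp
    have "y \<in> wp_class n a (pi_vec i a x)" using Qpi xQ class_mem[OF yvec] by simp
    then have "(pi_vec i a x, y) \<in> wp_rel n a" by (rule mem_class)
    then obtain l where l0: "l \<noteq> 0" and ly: "\<forall>j\<le>n. y j = l ^ a j * pi_vec i a x j"
      unfolding wp_rel_def by auto
    define \<zeta> where "\<zeta> = l * x i"
    have zA: "\<zeta> ^ a i = 1" using ly \<open>i \<le> n\<close> yi
      by (simp add: \<zeta>_def pi_vec_def power_mult_distrib)
    have z0: "\<zeta> \<noteq> 0" using zA apos \<open>i \<le> n\<close> by (metis power_0_left zero_neq_one not_gr0)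
    have "(x, y(i:=\<zeta>)) \<in> wp_rel n a'"
    proof -
      have "\<forall>j\<le>n. (y(i:=\<zeta>)) j = l ^ a' j * x j"
        using ly by (auto simp: a'_def \<zeta>_def pi_vec_def)
      then show ?thesis unfolding wp_rel_def using xv zvec[OF z0] l0 by blast
    qed
    then have Qz: "Q = wp_class n a' (y(i:=\<zeta>))" using Qx class_eq_iff[OF xv zvec[OF z0]] by blast
    have fx: "frob_vec q x \<in> wp_vecs n" using frob_vecs[OF q0 xv] .
    have fz: "frob_vec q (y(i:=\<zeta>)) \<in> wp_vecs n" using frob_vecs[OF q0 zvec[OF z0]] .
    have "(frob_vec q x, frob_vec q (y(i:=\<zeta>))) \<in> wp_rel n a'"
      using q0 \<open>(x, y(i:=\<zeta>)) \<in> wp_rel n a'\<close> by (rule frob_rel)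
    then have "wp_class n a' (frob_vec q x) = wp_class n a' (frob_vec q (y(i:=\<zeta>)))"
      using class_eq_iff[OF fx fz] by blast
    then have "wp_class n a' (frob_vec q (y(i:=\<zeta>))) = wp_class n a' (y(i:=\<zeta>))"
      using Qfrob xQ Qz by simp
    then have "(frob_vec q (y(i:=\<zeta>)), y(i:=\<zeta>)) \<in> wp_rel n a'"
      using class_eq_iff[OF fz zvec[OF z0]] by blast
    then obtain \<mu> where \<mu>0: "\<mu> \<noteq> 0" and
      \<mu>: "\<forall>j\<le>n. (y(i:=\<zeta>)) j = \<mu> ^ a' j * frob_vec q (y(i:=\<zeta>)) j"
      unfolding wp_rel_def by auto
    have "\<forall>j\<in>S'. \<mu> ^ a j = 1"
    proof
      fix j assume "j \<in> S'"
      then have j: "j \<le> n" "y j \<noteq> 0" "j \<noteq> i" unfolding S'_def by auto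
      then have "y j = \<mu> ^ a j * y j" using \<mu> yq by (auto simp: a'_def frob_vec_def)
      then show "\<mu> ^ a j = 1" using j by simp
    qed
    then have \<mu>d: "\<mu> ^ \<delta> = 1" unfolding \<delta>_def using pow_Gcd_one finS by blast
    have "\<zeta> = \<mu> * \<zeta> ^ q" using \<mu> \<open>i \<le> n\<close> by (auto simp: a'_def frob_vec_def)
    also have "\<zeta> ^ q = \<zeta> * \<zeta> ^ (q - 1)" using q1 by (cases q) auto
    finally have "\<zeta> * 1 = \<zeta> * (\<mu> * \<zeta> ^ (q - 1))" by (simp add: ac_simps)
    then have "\<mu> * \<zeta> ^ (q - 1) = 1" using z0 by (metis mult_left_cancel)
    then have "\<zeta> ^ (q - 1) = inverse \<mu>" by (metis inverse_unique)
    then have "\<zeta> ^ ((q - 1) * \<delta>) = 1" using \<mu>d by (simp add: power_mult power_inverse)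
    then have "\<zeta> ^ g = 1" using zA g pow_gcd_one by metis
    then show "Q \<in> (\<lambda>\<zeta>. wp_class n (a(i:=1)) (y(i:=\<zeta>))) ` {\<zeta>. \<zeta> ^ g = 1}"
      using Qz a'_def by auto
  next
    fix Q assume "Q \<in> (\<lambda>\<zeta>. wp_class n (a(i:=1)) (y(i:=\<zeta>))) ` {\<zeta>. \<zeta> ^ g = 1}"
    then obtain \<zeta> where zg: "\<zeta> ^ g = 1" and Qz: "Q = wp_class n a' (y(i:=\<zeta>))"
      unfolding a'_def by auto
    have z0: "\<zeta> \<noteq> 0" using zg g0 by (metis power_0_left zero_neq_one not_gr0)
    have zA: "\<zeta> ^ a i = 1"
      using zg g by (metis dvdE gcd_dvd1 power_mult power_one)
    have zv: "y(i:=\<zeta>) \<in> wp_vecs n" by (rule zvec[OF z0])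
    have QW: "Q \<in> WP n a'" using Qz class_in_WP[OF zv] by simp
    have zfrob: "(y(i:=\<zeta>), frob_vec q (y(i:=\<zeta>))) \<in> wp_rel n a'"
    proof -
      have "\<forall>j\<le>n. frob_vec q (y(i:=\<zeta>)) j = (\<zeta> ^ (q - 1)) ^ a' j * (y(i:=\<zeta>)) j"
      proof (intro allI impI)
        fix j assume jn: "j \<le> n"
        show "frob_vec q (y(i:=\<zeta>)) j = (\<zeta> ^ (q - 1)) ^ a' j * (y(i:=\<zeta>)) j"
        proof (cases "j = i")
          case True then show ?thesis using q1
            by (cases q) (auto simp: frob_vec_def a'_def)
        next
          case False
          show ?thesis
          proof (cases "y j = 0")
            case True then show ?thesis using False q1 by (simp add: frob_vec_def)
          next
            case yj: False
            then have "j \<in> S'" using False jn S'_def by auto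
            then have "\<delta> dvd a j" unfolding \<delta>_def by (simp add: Gcd_dvd)
            then have "g dvd (q - 1) * a j" using g
              by (metis dvd_trans gcd_dvd2 mult_dvd_mono dvd_refl)
            then have "(\<zeta> ^ (q - 1)) ^ a j = 1" using zg
              by (metis dvdE power_mult power_one)
            then show ?thesis using False yq jn by (simp add: frob_vec_def a'_def)
          qed
        qed
      qed
      moreover have "\<zeta> ^ (q - 1) \<noteq> 0" using z0 by simp
      moreover have "frob_vec q (y(i:=\<zeta>)) \<in> wp_vecs n" using frob_vecs q0 zv by blast
      ultimately show ?thesis unfolding wp_rel_def using zv by blast
    qed
    have "\<forall>x\<in>Q. wp_class n a' (frob_vec q x) = Q"
    proof
      fix x assume "x \<in> Q"
      then have zx: "(y(i:=\<zeta>), x) \<in> wp_rel n a'" using Qz mem_class by blast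
      then have xv: "x \<in> wp_vecs n" unfolding wp_rel_def by auto
      have fx: "frob_vec q x \<in> wp_vecs n" using frob_vecs[OF q0 xv] .
      have fz: "frob_vec q (y(i:=\<zeta>)) \<in> wp_vecs n" using frob_vecs[OF q0 zv] .
      have "(frob_vec q (y(i:=\<zeta>)), frob_vec q x) \<in> wp_rel n a'" using q0 zx by (rule frob_rel)
      then have "wp_class n a' (frob_vec q x) = wp_class n a' (frob_vec q (y(i:=\<zeta>)))"
        using class_eq_iff[OF fz fx] by blast
      also have "\<dots> = Q" using Qz zfrob class_eq_iff[OF zv fz] by metis
      finally show "wp_class n a' (frob_vec q x) = Q" .
    qed
    moreover have "\<forall>x\<in>Q. wp_class n a (pi_vec i a x) = wp_class n a y"
    proof
      fix x assume "x \<in> Q"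
      then have zx: "(y(i:=\<zeta>), x) \<in> wp_rel n a'" using Qz mem_class by blast
      then obtain l where xv: "x \<in> wp_vecs n" and l0: "l \<noteq> 0" and
        lx: "\<forall>j\<le>n. x j = l ^ a' j * (y(i:=\<zeta>)) j"
        unfolding wp_rel_def by auto
      have xi: "x i = l * \<zeta>" using lx \<open>i \<le> n\<close> by (simp add: a'_def)
      have piv: "pi_vec i a x \<in> wp_vecs n"
        using xv xi l0 z0 \<open>i \<le> n\<close> unfolding wp_vecs_def pi_vec_def by (auto intro!: exI[of _ i])
      have "\<forall>j\<le>n. pi_vec i a x j = l ^ a j * y j"
        using lx xi zA yi by (auto simp: pi_vec_def a'_def power_mult_distrib)
      then have "(y, pi_vec i a x) \<in> wp_rel n a" unfolding wp_rel_def using yvec piv l0 by blast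
      then show "wp_class n a (pi_vec i a x) = wp_class n a y"
        using class_eq_iff[OF yvec piv] by metis
    qed
    ultimately show "Q \<in> pi_fibre_rat n i a q (wp_class n a y)"
      using QW unfolding pi_fibre_rat_def WP_rat_def a'_def by auto
  qed
qed



lemma arith1:
  fixes A \<delta> Q :: nat assumes "A > 0"
  shows "gcd A (Q * \<delta>) = gcd A \<delta> * gcd (A div gcd A \<delta>) Q"
proof -
  define d where "d = gcd A \<delta>"
  define A1 where "A1 = A div d"
  define \<delta>1 where "\<delta>1 = \<delta> div d"
  have d0: "d > 0" using assms d_def by simp
  have A: "A = d * A1" unfolding A1_def d_def by simp
  have D: "\<delta> = d * \<delta>1" unfolding \<delta>1_def d_def by simp
  have cop: "coprime A1 \<delta>1" unfolding A1_def \<delta>1_def d_def using div_gcd_coprime assms by blast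
  have "gcd A (Q * \<delta>) = gcd (d * A1) (d * (Q * \<delta>1))" using A D by (simp add: ac_simps)
  also have "\<dots> = d * gcd A1 (Q * \<delta>1)" by (simp add: gcd_mult_distrib_nat)
  also have "gcd A1 (Q * \<delta>1) = gcd A1 Q" using cop by (rule gcd_mult_right_right_cancel)
  finally show ?thesis unfolding A1_def d_def by simp
qed

lemma arith2:
  fixes A d Q :: nat assumes "coprime d Q" "d dvd A"
  shows "gcd (A div d) Q = gcd A Q"
proof -
  obtain A1 where "A = d * A1" using assms(2) by blast
  then show ?thesis using assms
    by (cases "d = 0") (auto simp: coprime_commute gcd_mult_left_right_cancel mult.commute)
qed



theorem mainTheorem1:
  fixes p e q n i :: nat and a :: "nat \<Rightarrow> nat" and y :: "nat \<Rightarrow> 'k::field"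
  assumes "prime p" and "e \<ge> 1" and "q = p ^ e"
    and char: "of_nat p = (0::'k)"
    and alg_closed: "\<forall>f :: 'k poly. degree f > 0 \<longrightarrow> (\<exists>z. poly f z = 0)"
    and algebraic: "\<forall>z :: 'k. \<exists>m\<ge>1. z ^ (q ^ m) = z"
    and "n \<ge> 1" and "\<forall>j\<le>n. a j > 0" and "i \<le> n"
    and "y i = 1" and "\<forall>j\<le>n. y j ^ q = y j" and "\<forall>j>n. y j = 0"
    and "wp_class n a y \<noteq> wp_class n a (\<lambda>j. if j = i then (1::'k) else 0)"
  shows "finite (pi_fibre_rat n i a q (wp_class n a y)) \<and>
     real (card (pi_fibre_rat n i a q (wp_class n a y))) =
       real (gcd (a i) ((q - 1) * Gcd (a ` ({j. j \<le> n \<and> y j \<noteq> 0} - {i}))))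
       / real (Gcd (a ` {j. j \<le> n \<and> y j \<noteq> 0}))
   \<and> ((\<forall>j\<le>n. j \<noteq> i \<longrightarrow> gcd (gcd (a i) (a j)) (q - 1) = 1) \<longrightarrow>
       card (pi_fibre_rat n i a q (wp_class n a y)) = gcd (a i) (q - 1))"
proof -
  note apos = assms(8) and iN = assms(9) and yi = assms(10) and yq = assms(11) and yn = assms(12)
  define S' where "S' = {j. j \<le> n \<and> y j \<noteq> 0} - {i}"
  define \<delta> where "\<delta> = Gcd (a ` S')"
  define A where "A = a i"
  define d where "d = Gcd (a ` {j. j \<le> n \<and> y j \<noteq> 0})"
  define g where "g = gcd (a i) ((q - 1) * Gcd (a ` ({j. j \<le> n \<and> y j \<noteq> 0} - {i})))"
  define F where "F = pi_fibre_rat n i a q (wp_class n a y)"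
  define \<Phi> where "\<Phi> = (\<lambda>\<zeta>. wp_class n (a(i:=1)) (y(i:=\<zeta>)))"
  define m where "m = gcd (A div d) (q - 1)"
  have p1: "p > 1" using assms(1) prime_gt_1_nat by blast
  have pq: "p dvd q" using assms(2,3) by (simp add: dvd_power)
  have "p ^ 1 \<le> p ^ e" using assms(2) p1 by (intro power_increasing) auto
  then have q2: "q \<ge> 2" using assms(3) p1 by simp
  have A0: "A > 0" using apos iN A_def by simp
  have finS: "finite S'" unfolding S'_def by (rule finite_subset[of _ "{..n}"]) auto
  have Sins: "{j. j \<le> n \<and> y j \<noteq> 0} = insert i S'" using iN yi S'_def by auto
  have dd: "d = gcd A \<delta>" unfolding d_def Sins \<delta>_def A_def by simp
  have d0: "d > 0" using dd A0 by simp
  have gd: "g = gcd A ((q - 1) * \<delta>)" unfolding g_def A_def \<delta>_def S'_def ..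
  have gdm: "g = d * m" unfolding gd m_def dd using arith1[OF A0] by simp
  have m0: "m > 0" using q2 m_def by simp
  have pm: "\<not> p dvd m"
  proof
    assume "p dvd m"
    then have "p dvd q - 1" unfolding m_def by (meson dvd_trans gcd_dvd2)
    then have "p dvd q - (q - 1)" using pq by (simp add: dvd_diff_nat)
    then have "p dvd 1" using q2 by simp
    then show False using p1 by simp
  qed
  have mk: "of_nat m \<noteq> (0::'k)" using char_dvd[OF assms(1) char] pm by blast
  have Fe: "F = \<Phi> ` {\<zeta>. \<zeta> ^ g = 1}"
    unfolding F_def \<Phi>_def
    by (rule fibre_eq[OF _ apos iN yi yq yn g_def]) (use q2 in simp)
  have g0: "g > 0" using gdm d0 m0 by simp
  have zvec: "y(i:=\<zeta>) \<in> wp_vecs n" if "\<zeta> \<noteq> 0" for \<zeta>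
    unfolding wp_vecs_def using that yn iN by (auto intro!: exI[of _ i])
  have gA: "g dvd A" unfolding gd by simp
  have eqr: "\<forall>\<zeta>\<in>{\<zeta>. \<zeta> ^ g = 1}. \<forall>\<zeta>'\<in>{\<zeta>. \<zeta> ^ g = 1}. \<Phi> \<zeta> = \<Phi> \<zeta>' \<longleftrightarrow> \<zeta> ^ d = \<zeta>' ^ d"
  proof (intro ballI)
    fix \<zeta> \<zeta>' :: 'k assume "\<zeta> \<in> {\<zeta>. \<zeta> ^ g = 1}" "\<zeta>' \<in> {\<zeta>. \<zeta> ^ g = 1}"
    then have zg: "\<zeta> ^ g = 1" and zg': "\<zeta>' ^ g = 1" by auto
    have zA: "\<zeta> ^ A = 1" using zg gA by (metis dvdE power_mult power_one)
    have zA': "\<zeta>' ^ A = 1" using zg' gA by (metis dvdE power_mult power_one)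
    have z0: "\<zeta> \<noteq> 0" using zg g0 by (metis power_0_left zero_neq_one not_gr0)
    have z0': "\<zeta>' \<noteq> 0" using zg' g0 by (metis power_0_left zero_neq_one not_gr0)
    have "\<Phi> \<zeta> = \<Phi> \<zeta>' \<longleftrightarrow> (y(i:=\<zeta>), y(i:=\<zeta>')) \<in> wp_rel n (a(i:=1))"
      unfolding \<Phi>_def by (rule class_eq_iff[OF zvec[OF z0] zvec[OF z0']])
    also have "\<dots> \<longleftrightarrow> \<zeta> ^ d = \<zeta>' ^ d"
    proof
      assume "(y(i:=\<zeta>), y(i:=\<zeta>')) \<in> wp_rel n (a(i:=1))"
      then obtain l where l0: "l \<noteq> 0" and
        l: "\<forall>j\<le>n. (y(i:=\<zeta>')) j = l ^ (a(i:=1)) j * (y(i:=\<zeta>)) j"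
        unfolding wp_rel_def by auto
      have "\<forall>j\<in>S'. l ^ a j = 1"
      proof
        fix j assume "j \<in> S'"
        then have j: "j \<le> n" "y j \<noteq> 0" "j \<noteq> i" unfolding S'_def by auto
        then have "y j = l ^ a j * y j" using l by auto
        then show "l ^ a j = 1" using j by simp
      qed
      then have ld: "l ^ \<delta> = 1" unfolding \<delta>_def using pow_Gcd_one finS by blast
      have zz: "\<zeta>' = l * \<zeta>" using l iN by auto
      then have "l ^ A = 1" using zA zA' by (simp add: power_mult_distrib)
      then have "l ^ d = 1" using ld dd pow_gcd_one by metis
      then show "\<zeta> ^ d = \<zeta>' ^ d" using zz by (simp add: power_mult_distrib)
    next
      assume zd: "\<zeta> ^ d = \<zeta>' ^ d"
      define l where "l = \<zeta>' / \<zeta>"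
      have l0: "l \<noteq> 0" using z0 z0' l_def by simp
      have ld: "l ^ d = 1" using zd z0 z0' d0 unfolding l_def by (simp add: power_divide)
      have "\<forall>j\<le>n. (y(i:=\<zeta>')) j = l ^ (a(i:=1)) j * (y(i:=\<zeta>)) j"
      proof (intro allI impI)
        fix j assume jn: "j \<le> n"
        show "(y(i:=\<zeta>')) j = l ^ (a(i:=1)) j * (y(i:=\<zeta>)) j"
        proof (cases "j = i")
          case True then show ?thesis using z0 l_def by simp
        next
          case False
          show ?thesis
          proof (cases "y j = 0")
            case True then show ?thesis using False by simp
          next
            case yj: False
            then have "j \<in> S'" using False jn S'_def by auto
            then have "\<delta> dvd a j" unfolding \<delta>_def by (simp add: Gcd_dvd)
            then have "d dvd a j" unfolding dd by (meson dvd_trans gcd_dvd2)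
            then have "l ^ a j = 1" using ld by (metis dvdE power_mult power_one)
            then show ?thesis using False by simp
          qed
        qed
      qed
      then show "(y(i:=\<zeta>), y(i:=\<zeta>')) \<in> wp_rel n (a(i:=1))"
        unfolding wp_rel_def using l0 zvec[OF z0] zvec[OF z0'] by blast
    qed
    finally show "\<Phi> \<zeta> = \<Phi> \<zeta>' \<longleftrightarrow> \<zeta> ^ d = \<zeta>' ^ d" .
  qed
  have img: "(\<lambda>\<zeta>. \<zeta> ^ d) ` {\<zeta>::'k. \<zeta> ^ g = 1} = {w. w ^ m = 1}"
  proof (rule set_eqI, rule iffI)
    fix w assume "w \<in> (\<lambda>\<zeta>. \<zeta> ^ d) ` {\<zeta>::'k. \<zeta> ^ g = 1}"
    then show "w \<in> {w. w ^ m = 1}" using gdm by (auto simp: power_mult[symmetric])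
  next
    fix w :: 'k assume "w \<in> {w. w ^ m = 1}"
    moreover obtain \<zeta> where zw: "\<zeta> ^ d = w" using exists_root[OF alg_closed d0] by blast
    ultimately have "\<zeta> ^ g = 1" using gdm by (simp add: power_mult)
    then show "w \<in> (\<lambda>\<zeta>. \<zeta> ^ d) ` {\<zeta>::'k. \<zeta> ^ g = 1}" using zw by (intro image_eqI[of _ _ \<zeta>]) auto
  qed
  have cardF: "card F = m"
  proof -
    have "card F = card ((\<lambda>\<zeta>. \<zeta> ^ d) ` {\<zeta>::'k. \<zeta> ^ g = 1})"
      unfolding Fe by (rule card_image_eqrel[OF eqr])
    also have "\<dots> = m" unfolding img by (rule card_unity[OF alg_closed m0 mk])
    finally show ?thesis .
  qed
  have finF: "finite F" using cardF m0 card.infinite by fastforce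
  have part2: "card F = gcd A (q - 1)" if H: "\<forall>j\<le>n. j \<noteq> i \<longrightarrow> gcd (gcd (a i) (a j)) (q - 1) = 1"
  proof -
    have "S' \<noteq> {}"
    proof
      assume "S' = {}"
      have "y = (\<lambda>j. if j = i then (1::'k) else 0)"
      proof
        fix j show "y j = (if j = i then (1::'k) else 0)"
        proof (cases "j = i")
          case False
          show ?thesis
          proof (cases "j \<le> n")
            case True then show ?thesis using False \<open>S' = {}\<close> unfolding S'_def by auto
          next
            case False then show ?thesis using yn \<open>j \<noteq> i\<close> by simp
          qed
        qed (use yi in simp)
      qed
      then show False using assms(13) by simp
    qed
    then obtain j0 where j0: "j0 \<in> S'" by blast
    then have j0n: "j0 \<le> n" "j0 \<noteq> i" unfolding S'_def by auto
    have "\<delta> dvd a j0" unfolding \<delta>_def using j0 by (simp add: Gcd_dvd)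
    then have "d dvd a j0" unfolding dd by (meson dvd_trans gcd_dvd2)
    moreover have "d dvd A" unfolding dd by simp
    ultimately have "d dvd gcd (a i) (a j0)" unfolding A_def by simp
    then have "gcd d (q - 1) dvd gcd (gcd (a i) (a j0)) (q - 1)"
      by (intro gcd_greatest) (auto intro: dvd_trans[OF gcd_dvd1])
    moreover have "gcd (gcd (a i) (a j0)) (q - 1) = 1" using H j0n by blast
    ultimately have "gcd d (q - 1) = 1" by (metis nat_dvd_1_iff_1)
    then have "coprime d (q - 1)" by (simp only: coprime_iff_gcd_eq_1)
    then show ?thesis using cardF m_def arith2 \<open>d dvd A\<close> by simp
  qed
  have "real (card F) = real g / real d" using cardF gdm d0 by simp
  then show ?thesis using finF part2 unfolding F_def g_def d_def A_def by simp
qed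

end
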